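(* Let $k$ be a field of characteristic $\neq2$, let $f\in k[X]$ be separable of degree $6$ with set of roots $\Omega\subset\bar k$, let $l=k(\Omega)$, let $A=k[X]/(f)$, and let $\delta\in A^*$. Let $k'\subseteq\bar k$ be an extension of $k$ containing $l$, and write $A_{k'}=A\otimes_kk'$. For $\omega\in\Omega$ let $\mu_\omega\in A_{k'}$ be the element with $\varphi_\theta(\mu_\omega)=-1$ if $\theta=\omega$ and $\varphi_\theta(\mu_\omega)=1$ otherwise, where $\varphi_\theta:A_{k'}\to k'$ is $X\mapsto\theta$. For $\varepsilon\in A_{k'}$ with $\varepsilon^2=\delta$, let $L_\varepsilon\subset\mathbb{P}(A_{k'})$ be the line corresponding to the subspace $\{\varepsilon^{-1}(sX+t): s,t\in k'\}$; it lies on $V_{f,\delta}$. Let $P_{\varepsilon,\omega}\in L_\varepsilon$ be the point corresponding to $\{s\varepsilon^{-1}(X-\omega): s\in k'\}$. For $\mu\in A_{k'}^*$ let $[\mu]$ denote the automorphism of $\mathbb{P}(A_{k'})$ induced by multiplication by $\mu$. Then: (i) $[\mu_\omega]P_{\varepsilon,\omega}=P_{\varepsilon,\omega}$ for all $\omega\in\Omega$ and all such $\varepsilon$. (ii) For $\varepsilon,\varepsilon'\in A_{k'}$ with $\varepsilon^2=\varepsilon'^2=\delta$, put $L=L_\varepsilon$ and $L'=L_{\varepsilon'}$. The lines $L$ and $L'$ intersect if and only if there exists $\omega\in\Omega$ with $[\mu_\omega]L=L'$. In that case the intersection point is $P_{\varepsilon,\omega}=P_{\varepsilon',\omega}$.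
   Context: $V_{f,\delta}\subset\mathbb{P}(A)$ is the set of classes of nonzero $q$ with $\delta q^2$ in the span of $1,X,X^2$. *)

theory Defs
  imports "HOL-Computational_Algebra.Polynomial"
begin

text \<open>The field k is a subfield K of the field type 'a, which plays the role of k'.
  The algebra A_{k'} = k'[X]/(f) is modelled by polynomials of degree < degree f
  (canonical remainders), with multiplication modulo f.\<close>

definition subfield :: "'a::field set \<Rightarrow> bool" where
  "subfield K \<longleftrightarrow> 0 \<in> K \<and> 1 \<in> K \<and> (\<forall>x\<in>K. \<forall>y\<in>K. x + y \<in> K \<and> x * y \<in> K)
     \<and> (\<forall>x\<in>K. - x \<in> K \<and> inverse x \<in> K)"

definition poly_over :: "'a::field set \<Rightarrow> 'a poly \<Rightarrow> bool" where
  "poly_over K p \<longleftrightarrow> (\<forall>i. coeff p i \<in> K)"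

definition algebraic_over :: "'a::field set \<Rightarrow> 'a \<Rightarrow> bool" where
  "algebraic_over K x \<longleftrightarrow> (\<exists>p. p \<noteq> 0 \<and> poly_over K p \<and> poly p x = 0)"

definition separable_poly :: "'a::field poly \<Rightarrow> bool" where
  "separable_poly f \<longleftrightarrow> coprime f (pderiv f)"

definition Aelem :: "'a::field poly \<Rightarrow> 'a poly \<Rightarrow> bool" where
  "Aelem f p \<longleftrightarrow> degree p < degree f"

definition Amult :: "'a::field poly \<Rightarrow> 'a poly \<Rightarrow> 'a poly \<Rightarrow> 'a poly" where
  "Amult f p q = (p * q) mod f"

definition Ainv :: "'a::field poly \<Rightarrow> 'a poly \<Rightarrow> 'a poly" where
  "Ainv f e = (SOME u. Aelem f u \<and> Amult f u e = 1)"

definition mu :: "'a::field poly \<Rightarrow> 'a \<Rightarrow> 'a poly" where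
  "mu f w = (SOME p. Aelem f p \<and>
     (\<forall>\<theta>. poly f \<theta> = 0 \<longrightarrow> poly p \<theta> = (if \<theta> = w then -1 else 1)))"

text \<open>Linear subspaces of A_{k'} representing the line L_e and the point P_{e,w}.\<close>
definition Lsub :: "'a::field poly \<Rightarrow> 'a poly \<Rightarrow> 'a poly set" where
  "Lsub f e = {Amult f (Ainv f e) [:t, s:] | s t. True}"

definition Psub :: "'a::field poly \<Rightarrow> 'a poly \<Rightarrow> 'a \<Rightarrow> 'a poly set" where
  "Psub f e w = {Amult f (Ainv f e) (smult s [:-w, 1:]) | s. True}"

definition act :: "'a::field poly \<Rightarrow> 'a poly \<Rightarrow> 'a poly set \<Rightarrow> 'a poly set" where
  "act f m S = Amult f m ` S"

end

theory Submission imports Defs begin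

definition islin :: "'a::field poly \<Rightarrow> ('a \<Rightarrow> 'a) \<Rightarrow> bool" where
  "islin f g \<longleftrightarrow> (\<exists>s t. \<forall>\<theta>. poly f \<theta> = 0 \<longrightarrow> g \<theta> = s*\<theta>+t)"

lemma islin_cong: "(\<And>\<theta>. poly f \<theta> = 0 \<Longrightarrow> g \<theta> = h \<theta>) \<Longrightarrow> islin f g \<longleftrightarrow> islin f h"
  unfolding islin_def by auto

lemma islin_scale: assumes "(c::'a::field) \<noteq> 0" shows "islin f (\<lambda>\<theta>. c * g \<theta>) \<longleftrightarrow> islin f g"
proof
  assume "islin f (\<lambda>\<theta>. c * g \<theta>)"
  then obtain s t where st: "\<forall>\<theta>. poly f \<theta> = 0 \<longrightarrow> c * g \<theta> = s*\<theta>+t" unfolding islin_def by blast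
  have "\<forall>\<theta>. poly f \<theta> = 0 \<longrightarrow> g \<theta> = (s/c)*\<theta>+(t/c)"
    using st assms by (auto simp: field_simps)
  then show "islin f g" unfolding islin_def by blast
next
  assume "islin f g"
  then obtain s t where st: "\<forall>\<theta>. poly f \<theta> = 0 \<longrightarrow> g \<theta> = s*\<theta>+t" unfolding islin_def by blast
  have "\<forall>\<theta>. poly f \<theta> = 0 \<longrightarrow> c * g \<theta> = (c*s)*\<theta>+(c*t)"
    using st by (auto simp: field_simps)
  then show "islin f (\<lambda>\<theta>. c * g \<theta>)" unfolding islin_def by blast
qed

lemma lin2: fixes a b :: "'a::field"
  assumes "a \<noteq> b" "s*a+t = s'*a+t'" "s*b+t = s'*b+t'" shows "s = s' \<and> t = t'"
proof -
  have "(s*a+t) - (s*b+t) = (s'*a+t') - (s'*b+t')" using assms by simp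
  then have "(s - s') * (a - b) = 0" by (simp add: algebra_simps)
  then have "s = s'" using assms(1) by simp
  then show ?thesis using assms by simp
qed

lemma two_elems: assumes "finite A" "card A \<ge> 2" obtains a b where "a \<in> A" "b \<in> A" "a \<noteq> b"
proof -
  from assms obtain a where a: "a \<in> A" by fastforce
  have "card (A - {a}) \<ge> 1" using assms a by simp
  then have "A - {a} \<noteq> {}" by (metis card.empty not_one_le_zero)
  then obtain b where "b \<in> A - {a}" by blast
  then show ?thesis using that a by blast
qed

lemma Aelem_Amult: "degree f = 6 \<Longrightarrow> Aelem f (Amult f p q)"
  unfolding Aelem_def Amult_def
  by (metis degree_0 degree_mod_less zero_less_numeral degree_0 less_numeral_extra(3) zero_less_iff_neq_zero)

lemma poly_Amult: "poly f \<theta> = 0 \<Longrightarrow> poly (Amult f p q) \<theta> = poly p \<theta> * poly q \<theta>"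
proof -
  assume h: "poly f \<theta> = 0"
  have e: "poly (p*q) \<theta> = poly ((p*q) div f * f + (p*q) mod f) \<theta>" by (simp only: div_mult_mod_eq)
  have "poly ((p*q) div f * f + (p*q) mod f) \<theta> = poly ((p*q) div f) \<theta> * poly f \<theta> + poly ((p*q) mod f) \<theta>"
    by (simp only: poly_add poly_mult)
  then have "poly (p*q) \<theta> = poly ((p*q) mod f) \<theta>" using h e by simp
  then show ?thesis by (simp add: Amult_def)
qed

lemma Aeq: assumes "degree f = 6" "card {\<theta>. poly f \<theta> = 0} = 6" "Aelem f p" "Aelem f q"
  "\<And>\<theta>. poly f \<theta> = 0 \<Longrightarrow> poly p \<theta> = poly q \<theta>" shows "p = q"
  using assms by (intro poly_eqI_degree[of "{\<theta>. poly f \<theta> = 0}"]) (auto simp: Aelem_def)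

lemma Ainv_props: assumes "Aelem f u" "Amult f u e = 1"
  shows "Aelem f (Ainv f e) \<and> Amult f (Ainv f e) e = 1"
  using someI[of "\<lambda>u. Aelem f u \<and> Amult f u e = 1" u] assms unfolding Ainv_def by blast

lemma Ainv_poly: assumes "Aelem f u" "Amult f u e = 1" "poly f \<theta> = 0"
  shows "poly (Ainv f e) \<theta> * poly e \<theta> = 1"
  using Ainv_props[OF assms(1,2)] poly_Amult[OF assms(3), of "Ainv f e" e] by simp

lemma Lsub_char: assumes deg: "degree f = 6" and card: "card {\<theta>. poly f \<theta> = 0} = 6"
  and u: "Aelem f u" "Amult f u e = 1"
  shows "Lsub f e = {q. Aelem f q \<and> islin f (\<lambda>\<theta>. poly q \<theta> * poly e \<theta>)}"
proof (intro set_eqI iffI)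
  fix q assume "q \<in> Lsub f e"
  then obtain s t where q: "q = Amult f (Ainv f e) [:t, s:]" unfolding Lsub_def by blast
  have "\<forall>\<theta>. poly f \<theta> = 0 \<longrightarrow> poly q \<theta> * poly e \<theta> = s*\<theta>+t"
  proof (intro allI impI)
    fix \<theta> assume r: "poly f \<theta> = 0"
    have "poly q \<theta> * poly e \<theta> = (poly (Ainv f e) \<theta> * poly e \<theta>) * (t + \<theta>*s)"
      using poly_Amult[OF r] q by (simp add: algebra_simps)
    then show "poly q \<theta> * poly e \<theta> = s*\<theta>+t" using Ainv_poly[OF u r] by (simp add: algebra_simps)
  qed
  then show "q \<in> {q. Aelem f q \<and> islin f (\<lambda>\<theta>. poly q \<theta> * poly e \<theta>)}"
    unfolding islin_def using q Aelem_Amult[OF deg] by blast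
next
  fix q assume "q \<in> {q. Aelem f q \<and> islin f (\<lambda>\<theta>. poly q \<theta> * poly e \<theta>)}"
  then obtain s t where A: "Aelem f q" and st: "\<forall>\<theta>. poly f \<theta> = 0 \<longrightarrow> poly q \<theta> * poly e \<theta> = s*\<theta>+t"
    unfolding islin_def by blast
  have "q = Amult f (Ainv f e) [:t, s:]"
  proof (rule Aeq[OF deg card A Aelem_Amult[OF deg]])
    fix \<theta> assume r: "poly f \<theta> = 0"
    have 1: "poly (Ainv f e) \<theta> * poly e \<theta> = 1" using Ainv_poly[OF u r] .
    have "poly q \<theta> = poly q \<theta> * (poly (Ainv f e) \<theta> * poly e \<theta>)" using 1 by simp
    also have "\<dots> = (poly q \<theta> * poly e \<theta>) * poly (Ainv f e) \<theta>" by (simp add: algebra_simps)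
    also have "\<dots> = poly (Amult f (Ainv f e) [:t, s:]) \<theta>" using st r poly_Amult[OF r] by (simp add: algebra_simps)
    finally show "poly q \<theta> = poly (Amult f (Ainv f e) [:t, s:]) \<theta>" .
  qed
  then show "q \<in> Lsub f e" unfolding Lsub_def by blast
qed

lemma Psub_char: assumes deg: "degree f = 6" and card: "card {\<theta>. poly f \<theta> = 0} = 6"
  and u: "Aelem f u" "Amult f u e = 1"
  shows "Psub f e w = {q. Aelem f q \<and> (\<exists>s. \<forall>\<theta>. poly f \<theta> = 0 \<longrightarrow> poly q \<theta> * poly e \<theta> = s*(\<theta>-w))}"
proof (intro set_eqI iffI)
  fix q assume "q \<in> Psub f e w"
  then obtain s where q: "q = Amult f (Ainv f e) (smult s [:-w, 1:])" unfolding Psub_def by blast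
  have "\<forall>\<theta>. poly f \<theta> = 0 \<longrightarrow> poly q \<theta> * poly e \<theta> = s*(\<theta>-w)"
  proof (intro allI impI)
    fix \<theta> assume r: "poly f \<theta> = 0"
    have "poly q \<theta> * poly e \<theta> = (poly (Ainv f e) \<theta> * poly e \<theta>) * (s*(\<theta>-w))"
      using poly_Amult[OF r] q by (simp add: algebra_simps)
    then show "poly q \<theta> * poly e \<theta> = s*(\<theta>-w)" using Ainv_poly[OF u r] by (simp add: algebra_simps)
  qed
  then show "q \<in> {q. Aelem f q \<and> (\<exists>s. \<forall>\<theta>. poly f \<theta> = 0 \<longrightarrow> poly q \<theta> * poly e \<theta> = s*(\<theta>-w))}"
    using q Aelem_Amult[OF deg] by blast
next
  fix q assume "q \<in> {q. Aelem f q \<and> (\<exists>s. \<forall>\<theta>. poly f \<theta> = 0 \<longrightarrow> poly q \<theta> * poly e \<theta> = s*(\<theta>-w))}"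
  then obtain s where A: "Aelem f q" and st: "\<forall>\<theta>. poly f \<theta> = 0 \<longrightarrow> poly q \<theta> * poly e \<theta> = s*(\<theta>-w)"
    by blast
  have "q = Amult f (Ainv f e) (smult s [:-w, 1:])"
  proof (rule Aeq[OF deg card A Aelem_Amult[OF deg]])
    fix \<theta> assume r: "poly f \<theta> = 0"
    have 1: "poly (Ainv f e) \<theta> * poly e \<theta> = 1" using Ainv_poly[OF u r] .
    have "poly q \<theta> = poly q \<theta> * (poly (Ainv f e) \<theta> * poly e \<theta>)" using 1 by simp
    also have "\<dots> = (poly q \<theta> * poly e \<theta>) * poly (Ainv f e) \<theta>" by (simp add: algebra_simps)
    also have "\<dots> = s*(\<theta>-w) * poly (Ainv f e) \<theta>" using st r by simp
    also have "\<dots> = poly (Amult f (Ainv f e) (smult s [:-w, 1:])) \<theta>" using poly_Amult[OF r] by (simp add: algebra_simps)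
    finally show "poly q \<theta> = poly (Amult f (Ainv f e) (smult s [:-w, 1:])) \<theta>" .
  qed
  then show "q \<in> Psub f e w" unfolding Psub_def by blast
qed

lemma act_char: assumes deg: "degree f = 6" and card: "card {\<theta>. poly f \<theta> = 0} = 6"
  and m: "Aelem f m" "\<And>\<theta>. poly f \<theta> = 0 \<Longrightarrow> poly m \<theta> * poly m \<theta> = 1"
  and S: "S \<subseteq> {q. Aelem f q}"
  shows "act f m S = {q. Aelem f q \<and> Amult f m q \<in> S}"
proof -
  have inv: "Amult f m (Amult f m q) = q" if "Aelem f q" for q
    by (rule Aeq[OF deg card Aelem_Amult[OF deg] that])
       (simp add: poly_Amult mult.assoc[symmetric] m(2))
  show ?thesis
  proof (intro set_eqI iffI)
    fix x assume "x \<in> act f m S"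
    then obtain p where p: "p \<in> S" "x = Amult f m p" unfolding act_def by blast
    then show "x \<in> {q. Aelem f q \<and> Amult f m q \<in> S}" using inv S Aelem_Amult[OF deg] by auto
  next
    fix x assume "x \<in> {q. Aelem f q \<and> Amult f m q \<in> S}"
    then show "x \<in> act f m S" unfolding act_def using inv by (metis image_eqI mem_Collect_eq)
  qed
qed

lemma mu_props: assumes deg: "degree f = 6" and card: "card {\<theta>. poly f \<theta> = 0} = 6"
  and w: "poly f w = 0"
  shows "Aelem f (mu f w) \<and> (\<forall>\<theta>. poly f \<theta> = 0 \<longrightarrow> poly (mu f w) \<theta> = (if \<theta> = w then -1 else 1))"
proof -
  define g where "g = f div [:-w, 1:]"
  have dv: "[:-w, 1:] dvd f" using w poly_eq_0_iff_dvd by blast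
  have fg: "f = [:-w, 1:] * g" unfolding g_def using dv by (metis dvd_mult_div_cancel)
  have f0: "f \<noteq> 0" using deg by auto
  have g0: "g \<noteq> 0" using f0 fg by auto
  have dg: "degree g = 5" proof -
    have "degree f = degree [:-w, 1:] + degree g" using fg g0 by (metis degree_mult_eq pCons_eq_0_iff zero_neq_one)
    then show ?thesis using deg by simp
  qed
  have gz: "poly g \<theta> = 0" if "poly f \<theta> = 0" "\<theta> \<noteq> w" for \<theta>
    using that fg by simp
  have gw: "poly g w \<noteq> 0"
  proof
    assume "poly g w = 0"
    then have "{\<theta>. poly f \<theta> = 0} \<subseteq> {\<theta>. poly g \<theta> = 0}" using gz by auto
    then have "card {\<theta>. poly f \<theta> = 0} \<le> card {\<theta>. poly g \<theta> = 0}"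
      by (intro card_mono poly_roots_finite g0)
    also have "\<dots> \<le> 5" using card_poly_roots_bound[OF g0] dg by simp
    finally show False using card by simp
  qed
  define p where "p = 1 - smult (2 / poly g w) g"
  have "degree p \<le> 5" unfolding p_def
    by (rule degree_diff_le) (use dg degree_smult_le[of "2 / poly g w" g] in auto)
  then have Ap: "Aelem f p" using deg by (simp add: Aelem_def)
  have vp: "\<forall>\<theta>. poly f \<theta> = 0 \<longrightarrow> poly p \<theta> = (if \<theta> = w then -1 else 1)"
    using gw gz by (auto simp: p_def)
  show ?thesis unfolding mu_def
    by (rule someI[of "\<lambda>p. Aelem f p \<and> (\<forall>\<theta>. poly f \<theta> = 0 \<longrightarrow> poly p \<theta> = (if \<theta> = w then -1 else 1))" p])
       (use Ap vp in blast)
qed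

lemma three_elems: assumes "finite A" "card A \<ge> 3" obtains a b c where "a \<in> A" "b \<in> A" "c \<in> A" "a \<noteq> b" "a \<noteq> c" "b \<noteq> c"
proof -
  from assms obtain a where a: "a \<in> A" by fastforce
  have "card (A - {a}) \<ge> 2" using assms a by simp
  then obtain b c where "b \<in> A - {a}" "c \<in> A - {a}" "b \<noteq> c" using two_elems[of "A - {a}"] assms by auto
  then show ?thesis using that a by blast
qed

lemma two_other: assumes "finite A" "card A \<ge> 3" "w \<in> A" obtains a b where "a \<in> A" "b \<in> A" "a \<noteq> b" "a \<noteq> w" "b \<noteq> w"
proof -
  have "card (A - {w}) \<ge> 2" using assms by simp
  then obtain a b where "a \<in> A - {w}" "b \<in> A - {w}" "a \<noteq> b" using two_elems[of "A - {w}"] assms by auto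
  then show ?thesis using that by blast
qed

lemma lin_const: assumes "islin f \<rho>" "\<forall>\<theta>. poly f \<theta> = 0 \<longrightarrow> \<rho> \<theta> = 1 \<or> \<rho> \<theta> = -1"
  "poly f a = 0" "poly f b = 0" "poly f c = 0" "a \<noteq> b" "a \<noteq> c" "b \<noteq> c"
  shows "\<exists>\<sigma>. (\<sigma> = 1 \<or> \<sigma> = -1) \<and> (\<forall>\<theta>. poly f \<theta> = 0 \<longrightarrow> \<rho> \<theta> = \<sigma>)"
proof -
  obtain s t where st: "\<forall>\<theta>. poly f \<theta> = 0 \<longrightarrow> \<rho> \<theta> = s*\<theta>+t" using assms(1) unfolding islin_def by blast
  have "\<exists>x y. poly f x = 0 \<and> poly f y = 0 \<and> x \<noteq> y \<and> \<rho> x = \<rho> y"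
    using assms(2-8) by metis
  then obtain x y where xy: "poly f x = 0" "poly f y = 0" "x \<noteq> y" "\<rho> x = \<rho> y" by blast
  have "s*x+t = 0*x+\<rho> x" "s*y+t = 0*y+\<rho> x" using st xy by auto
  then have "s = 0 \<and> t = \<rho> x" using lin2[OF xy(3)] by blast
  then show ?thesis using st assms(2) xy(1) by (intro exI[of _ "\<rho> x"]) auto
qed

lemma mu_not_lin: assumes "(2::'a::field) \<noteq> 0" "poly f w = 0" "poly f a = 0" "poly f b = 0" "a \<noteq> b" "a \<noteq> w" "b \<noteq> w"
  shows "\<not> islin f (\<lambda>\<theta>. if \<theta> = w then -1 else (1::'a))"
proof
  assume "islin f (\<lambda>\<theta>. if \<theta> = w then -1 else (1::'a))"
  then obtain s t where st: "\<forall>\<theta>. poly f \<theta> = 0 \<longrightarrow> (if \<theta> = w then -1 else (1::'a)) = s*\<theta>+t" unfolding islin_def by blast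
  have "s*a+t = 0*a+1" "s*b+t = 0*b+1" using st assms by auto
  then have "s = 0 \<and> t = 1" using lin2[OF assms(5)] by blast
  then have "(-1::'a) = 1" using st assms(2) by auto
  then have "(2::'a) = 0" by (metis add.inverse_inverse one_add_one neg_eq_iff_add_eq_0 add.commute)
  then show False using assms(1) by simp
qed

theorem proposition2p13:
  fixes K :: "'a::field set" and f \<delta> :: "'a poly"
  assumes "subfield K"
    and "\<forall>x. algebraic_over K x"
    and "(2::'a) \<noteq> 0"
    and "poly_over K f" and "degree f = 6" and "separable_poly f"
    and "card {\<theta>. poly f \<theta> = 0} = 6"
    and "poly_over K \<delta>" and "Aelem f \<delta>"
    and "\<exists>u. poly_over K u \<and> Aelem f u \<and> Amult f u \<delta> = 1"
  shows "(\<forall>\<omega> \<epsilon>. poly f \<omega> = 0 \<longrightarrow> Aelem f \<epsilon> \<longrightarrow> Amult f \<epsilon> \<epsilon> = \<delta> \<longrightarrow>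
            act f (mu f \<omega>) (Psub f \<epsilon> \<omega>) = Psub f \<epsilon> \<omega>)
       \<and> (\<forall>\<epsilon> \<epsilon>'. Aelem f \<epsilon> \<longrightarrow> Aelem f \<epsilon>' \<longrightarrow> Amult f \<epsilon> \<epsilon> = \<delta> \<longrightarrow> Amult f \<epsilon>' \<epsilon>' = \<delta> \<longrightarrow>
            ((Lsub f \<epsilon> \<noteq> Lsub f \<epsilon>' \<and> (\<exists>q. q \<noteq> 0 \<and> q \<in> Lsub f \<epsilon> \<inter> Lsub f \<epsilon>'))
               \<longleftrightarrow> (\<exists>\<omega>. poly f \<omega> = 0 \<and> act f (mu f \<omega>) (Lsub f \<epsilon>) = Lsub f \<epsilon>'))
          \<and> (\<forall>\<omega>. poly f \<omega> = 0 \<longrightarrow> act f (mu f \<omega>) (Lsub f \<epsilon>) = Lsub f \<epsilon>' \<longrightarrow>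
               Lsub f \<epsilon> \<inter> Lsub f \<epsilon>' = Psub f \<epsilon> \<omega> \<and> Psub f \<epsilon> \<omega> = Psub f \<epsilon>' \<omega>))"
proof -
  have deg: "degree f = 6" and card: "card {\<theta>. poly f \<theta> = 0} = 6" using assms by simp_all
  have two: "(2::'a) \<noteq> 0" using assms by simp
  have f0: "f \<noteq> 0" using deg by auto
  have fin: "finite {\<theta>. poly f \<theta> = 0}" by (rule poly_roots_finite[OF f0])
  have c3: "card {\<theta>. poly f \<theta> = 0} \<ge> 3" using card by simp
  obtain u0 where u0: "Aelem f u0" "Amult f u0 \<delta> = 1" using assms(10) by blast
  have one: "Aelem f 1" using deg by (simp add: Aelem_def)
  have zero: "Aelem f 0" using deg by (simp add: Aelem_def)
  have Dnz: "poly \<delta> \<theta> \<noteq> 0" if "poly f \<theta> = 0" for \<theta>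
    using poly_Amult[OF that, of u0 \<delta>] u0 by auto
  have pe: "poly e \<theta> * poly e \<theta> = poly \<delta> \<theta>" if "Amult f e e = \<delta>" "poly f \<theta> = 0" for e \<theta>
    using poly_Amult[OF that(2), of e e] that(1) by simp
  have sq: "Aelem f (Amult f u0 e) \<and> Amult f (Amult f u0 e) e = 1 \<and> (\<forall>\<theta>. poly f \<theta> = 0 \<longrightarrow> poly e \<theta> \<noteq> 0)"
     if e: "Aelem f e" "Amult f e e = \<delta>" for e
  proof -
    have "Amult f (Amult f u0 e) e = 1"
    proof (rule Aeq[OF deg card Aelem_Amult[OF deg] one])
      fix \<theta> assume r: "poly f \<theta> = 0"
      have "poly (Amult f (Amult f u0 e) e) \<theta> = poly u0 \<theta> * (poly e \<theta> * poly e \<theta>)"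
        by (simp add: poly_Amult[OF r] mult.assoc)
      also have "\<dots> = 1" using pe[OF e(2) r] poly_Amult[OF r, of u0 \<delta>] u0(2) by simp
      finally show "poly (Amult f (Amult f u0 e) e) \<theta> = poly 1 \<theta>" by simp
    qed
    moreover have "\<forall>\<theta>. poly f \<theta> = 0 \<longrightarrow> poly e \<theta> \<noteq> 0" using pe[OF e(2)] Dnz by fastforce
    ultimately show ?thesis using Aelem_Amult[OF deg] by blast
  qed
  have P1: "\<forall>\<omega> \<epsilon>. poly f \<omega> = 0 \<longrightarrow> Aelem f \<epsilon> \<longrightarrow> Amult f \<epsilon> \<epsilon> = \<delta> \<longrightarrow>
            act f (mu f \<omega>) (Psub f \<epsilon> \<omega>) = Psub f \<epsilon> \<omega>"
  proof (intro allI impI)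
    fix \<omega> \<epsilon> assume w: "poly f \<omega> = 0" and e: "Aelem f \<epsilon>" "Amult f \<epsilon> \<epsilon> = \<delta>"
    define u where "u = Amult f u0 \<epsilon>"
    have u: "Aelem f u" "Amult f u \<epsilon> = 1" using sq[OF e] unfolding u_def by auto
    note M = mu_props[OF deg card w]
    have Psub_sub: "Psub f \<epsilon> \<omega> \<subseteq> {q. Aelem f q}" using Psub_char[OF deg card u] by auto
    have Mi: "poly (mu f \<omega>) \<theta> * poly (mu f \<omega>) \<theta> = 1" if "poly f \<theta> = 0" for \<theta> using M that by auto
    have key: "(\<exists>s. \<forall>\<theta>. poly f \<theta> = 0 \<longrightarrow> poly (Amult f (mu f \<omega>) q) \<theta> * poly \<epsilon> \<theta> = s*(\<theta>-\<omega>))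
       \<longleftrightarrow> (\<exists>s. \<forall>\<theta>. poly f \<theta> = 0 \<longrightarrow> poly q \<theta> * poly \<epsilon> \<theta> = s*(\<theta>-\<omega>))" for q
    proof -
      have "\<forall>\<theta> s. poly f \<theta> = 0 \<longrightarrow> (poly (Amult f (mu f \<omega>) q) \<theta> * poly \<epsilon> \<theta> = s*(\<theta>-\<omega>)
           \<longleftrightarrow> poly q \<theta> * poly \<epsilon> \<theta> = s*(\<theta>-\<omega>))"
        using M by (auto simp: poly_Amult)
      then show ?thesis by blast
    qed
    have ac: "act f (mu f \<omega>) (Psub f \<epsilon> \<omega>) = {q. Aelem f q \<and> Amult f (mu f \<omega>) q \<in> Psub f \<epsilon> \<omega>}"
      by (rule act_char[OF deg card conjunct1[OF M] Mi Psub_sub])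
    show "act f (mu f \<omega>) (Psub f \<epsilon> \<omega>) = Psub f \<epsilon> \<omega>"
      unfolding ac unfolding Psub_char[OF deg card u]
    proof (intro set_eqI iffI)
      fix q assume "q \<in> {q. Aelem f q \<and> Amult f (mu f \<omega>) q \<in> {q. Aelem f q \<and> (\<exists>s. \<forall>\<theta>. poly f \<theta> = 0 \<longrightarrow> poly q \<theta> * poly \<epsilon> \<theta> = s * (\<theta> - \<omega>))}}"
      then show "q \<in> {q. Aelem f q \<and> (\<exists>s. \<forall>\<theta>. poly f \<theta> = 0 \<longrightarrow> poly q \<theta> * poly \<epsilon> \<theta> = s * (\<theta> - \<omega>))}"
        using key[of q] by simp
    next
      fix q assume "q \<in> {q. Aelem f q \<and> (\<exists>s. \<forall>\<theta>. poly f \<theta> = 0 \<longrightarrow> poly q \<theta> * poly \<epsilon> \<theta> = s * (\<theta> - \<omega>))}"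
      then show "q \<in> {q. Aelem f q \<and> Amult f (mu f \<omega>) q \<in> {q. Aelem f q \<and> (\<exists>s. \<forall>\<theta>. poly f \<theta> = 0 \<longrightarrow> poly q \<theta> * poly \<epsilon> \<theta> = s * (\<theta> - \<omega>))}}"
        using key[of q] Aelem_Amult[OF deg] by simp
    qed
  qed
  have P2: "\<forall>\<epsilon> \<epsilon>'. Aelem f \<epsilon> \<longrightarrow> Aelem f \<epsilon>' \<longrightarrow> Amult f \<epsilon> \<epsilon> = \<delta> \<longrightarrow> Amult f \<epsilon>' \<epsilon>' = \<delta> \<longrightarrow>
            ((Lsub f \<epsilon> \<noteq> Lsub f \<epsilon>' \<and> (\<exists>q. q \<noteq> 0 \<and> q \<in> Lsub f \<epsilon> \<inter> Lsub f \<epsilon>'))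
               \<longleftrightarrow> (\<exists>\<omega>. poly f \<omega> = 0 \<and> act f (mu f \<omega>) (Lsub f \<epsilon>) = Lsub f \<epsilon>'))
          \<and> (\<forall>\<omega>. poly f \<omega> = 0 \<longrightarrow> act f (mu f \<omega>) (Lsub f \<epsilon>) = Lsub f \<epsilon>' \<longrightarrow>
               Lsub f \<epsilon> \<inter> Lsub f \<epsilon>' = Psub f \<epsilon> \<omega> \<and> Psub f \<epsilon> \<omega> = Psub f \<epsilon>' \<omega>)"
  proof (intro allI impI)
    fix \<epsilon> \<epsilon>' assume e: "Aelem f \<epsilon>" "Aelem f \<epsilon>'" "Amult f \<epsilon> \<epsilon> = \<delta>" "Amult f \<epsilon>' \<epsilon>' = \<delta>"
    define u where "u = Amult f u0 \<epsilon>"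
    have u: "Aelem f u" "Amult f u \<epsilon> = 1" using sq[OF e(1,3)] unfolding u_def by auto
    define u' where "u' = Amult f u0 \<epsilon>'"
    have u': "Aelem f u'" "Amult f u' \<epsilon>' = 1" using sq[OF e(2,4)] unfolding u'_def by auto
    have Enz: "\<And>\<theta>. poly f \<theta> = 0 \<Longrightarrow> poly \<epsilon> \<theta> \<noteq> 0" using sq[OF e(1,3)] by blast
    have Enz': "\<And>\<theta>. poly f \<theta> = 0 \<Longrightarrow> poly \<epsilon>' \<theta> \<noteq> 0" using sq[OF e(2,4)] by blast
    define \<rho> where "\<rho> \<theta> = poly \<epsilon>' \<theta> / poly \<epsilon> \<theta>" for \<theta>
    have rho: "poly \<epsilon>' \<theta> = \<rho> \<theta> * poly \<epsilon> \<theta> \<and> poly \<epsilon> \<theta> = \<rho> \<theta> * poly \<epsilon>' \<theta> \<and> (\<rho> \<theta> = 1 \<or> \<rho> \<theta> = -1)"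
      if r: "poly f \<theta> = 0" for \<theta>
    proof -
      have "poly \<epsilon>' \<theta> * poly \<epsilon>' \<theta> = poly \<epsilon> \<theta> * poly \<epsilon> \<theta>" using pe[OF e(3) r] pe[OF e(4) r] by simp
      then have "poly \<epsilon>' \<theta> = poly \<epsilon> \<theta> \<or> poly \<epsilon>' \<theta> = - poly \<epsilon> \<theta>" by (simp add: square_eq_iff)
      then show ?thesis using Enz[OF r] unfolding \<rho>_def by auto
    qed
    have rho1: "poly \<epsilon>' \<theta> = \<rho> \<theta> * poly \<epsilon> \<theta>" if "poly f \<theta> = 0" for \<theta> using rho[OF that] by blast
    have rho2: "poly \<epsilon> \<theta> = \<rho> \<theta> * poly \<epsilon>' \<theta>" if "poly f \<theta> = 0" for \<theta> using rho[OF that] by blast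
    have rho3: "\<rho> \<theta> = 1 \<or> \<rho> \<theta> = -1" if "poly f \<theta> = 0" for \<theta> using rho[OF that] by blast
    define L where "L = Lsub f \<epsilon>"
    define L' where "L' = Lsub f \<epsilon>'"
    have Lc: "L = {q. Aelem f q \<and> islin f (\<lambda>\<theta>. poly q \<theta> * poly \<epsilon> \<theta>)}" unfolding L_def by (rule Lsub_char[OF deg card u])
    have Lc': "L' = {q. Aelem f q \<and> islin f (\<lambda>\<theta>. poly q \<theta> * poly \<epsilon>' \<theta>)}" unfolding L'_def by (rule Lsub_char[OF deg card u'])
    have Pc: "Psub f \<epsilon> w = {q. Aelem f q \<and> (\<exists>s. \<forall>\<theta>. poly f \<theta> = 0 \<longrightarrow> poly q \<theta> * poly \<epsilon> \<theta> = s*(\<theta>-w))}" for w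
      by (rule Psub_char[OF deg card u])
    have Pc': "Psub f \<epsilon>' w = {q. Aelem f q \<and> (\<exists>s. \<forall>\<theta>. poly f \<theta> = 0 \<longrightarrow> poly q \<theta> * poly \<epsilon>' \<theta> = s*(\<theta>-w))}" for w
      by (rule Psub_char[OF deg card u'])
    have L'rho: "islin f (\<lambda>\<theta>. poly q \<theta> * poly \<epsilon>' \<theta>) \<longleftrightarrow> islin f (\<lambda>\<theta>. \<rho> \<theta> * (poly q \<theta> * poly \<epsilon> \<theta>))" for q
      by (rule islin_cong) (simp add: rho1)
    have claimC: "act f (mu f \<omega>) L = L'"
      if w: "poly f \<omega> = 0" and sg: "\<sigma> = 1 \<or> \<sigma> = -1" and rs: "\<forall>\<theta>. poly f \<theta> = 0 \<longrightarrow> \<rho> \<theta> = \<sigma> * poly (mu f \<omega>) \<theta>"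
      for \<omega> \<sigma>
    proof -
      note M = mu_props[OF deg card w]
      have Mi: "poly (mu f \<omega>) \<theta> * poly (mu f \<omega>) \<theta> = 1" if "poly f \<theta> = 0" for \<theta> using M that by auto
      have Lsub: "L \<subseteq> {q. Aelem f q}" using Lc by auto
      have s0: "\<sigma> \<noteq> 0" using sg two by auto
      have "islin f (\<lambda>\<theta>. poly (Amult f (mu f \<omega>) q) \<theta> * poly \<epsilon> \<theta>) \<longleftrightarrow> islin f (\<lambda>\<theta>. poly q \<theta> * poly \<epsilon>' \<theta>)" for q
      proof -
        have "islin f (\<lambda>\<theta>. poly q \<theta> * poly \<epsilon>' \<theta>) \<longleftrightarrow> islin f (\<lambda>\<theta>. \<sigma> * (poly (Amult f (mu f \<omega>) q) \<theta> * poly \<epsilon> \<theta>))"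
          unfolding L'rho by (rule islin_cong) (simp add: rs poly_Amult)
        then show ?thesis using islin_scale[OF s0] by simp
      qed
      note kk = this
      have ac: "act f (mu f \<omega>) L = {q. Aelem f q \<and> Amult f (mu f \<omega>) q \<in> L}"
        by (rule act_char[OF deg card conjunct1[OF M] Mi Lsub])
      show ?thesis unfolding ac
      proof (intro set_eqI iffI)
        fix q assume "q \<in> {q. Aelem f q \<and> Amult f (mu f \<omega>) q \<in> L}"
        then show "q \<in> L'" using kk[of q] Lc Lc' by simp
      next
        fix q assume "q \<in> L'"
        then show "q \<in> {q. Aelem f q \<and> Amult f (mu f \<omega>) q \<in> L}" using kk[of q] Lc Lc' Aelem_Amult[OF deg] by simp
      qed
    qed
    have claimA: "\<exists>\<sigma>. (\<sigma> = 1 \<or> \<sigma> = -1) \<and> (\<forall>\<theta>. poly f \<theta> = 0 \<longrightarrow> \<rho> \<theta> = \<sigma> * poly (mu f \<omega>) \<theta>)"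
      if w: "poly f \<omega> = 0" and act: "act f (mu f \<omega>) L = L'" for \<omega>
    proof -
      note M = mu_props[OF deg card w]
      define q0 where "q0 = Ainv f \<epsilon>"
      have q0: "Aelem f q0" using Ainv_props[OF u] unfolding q0_def by blast
      have q0E: "poly q0 \<theta> * poly \<epsilon> \<theta> = 1" if "poly f \<theta> = 0" for \<theta> unfolding q0_def by (rule Ainv_poly[OF u that])
      have "islin f (\<lambda>\<theta>. poly q0 \<theta> * poly \<epsilon> \<theta>)" unfolding islin_def
        by (rule exI[of _ 0], rule exI[of _ 1]) (simp add: q0E)
      then have "q0 \<in> L" using Lc q0 by simp
      then have "Amult f (mu f \<omega>) q0 \<in> L'" using act unfolding act_def by blast
      then have "islin f (\<lambda>\<theta>. poly (Amult f (mu f \<omega>) q0) \<theta> * poly \<epsilon>' \<theta>)" using Lc' by simp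
      moreover have "islin f (\<lambda>\<theta>. poly (Amult f (mu f \<omega>) q0) \<theta> * poly \<epsilon>' \<theta>) \<longleftrightarrow> islin f (\<lambda>\<theta>. poly (mu f \<omega>) \<theta> * \<rho> \<theta>)"
      proof (rule islin_cong)
        fix \<theta> assume r: "poly f \<theta> = 0"
        have "poly (Amult f (mu f \<omega>) q0) \<theta> * poly \<epsilon>' \<theta> = poly (mu f \<omega>) \<theta> * \<rho> \<theta> * (poly q0 \<theta> * poly \<epsilon> \<theta>)"
          using rho1[OF r] poly_Amult[OF r] by (simp add: algebra_simps)
        then show "poly (Amult f (mu f \<omega>) q0) \<theta> * poly \<epsilon>' \<theta> = poly (mu f \<omega>) \<theta> * \<rho> \<theta>" using q0E[OF r] by simp
      qed
      ultimately have lin: "islin f (\<lambda>\<theta>. poly (mu f \<omega>) \<theta> * \<rho> \<theta>)" by simp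
      obtain a b c where abc: "a \<in> {\<theta>. poly f \<theta> = 0}" "b \<in> {\<theta>. poly f \<theta> = 0}" "c \<in> {\<theta>. poly f \<theta> = 0}" "a \<noteq> b" "a \<noteq> c" "b \<noteq> c"
        using three_elems[OF fin c3] by blast
      have pm: "\<forall>\<theta>. poly f \<theta> = 0 \<longrightarrow> poly (mu f \<omega>) \<theta> * \<rho> \<theta> = 1 \<or> poly (mu f \<omega>) \<theta> * \<rho> \<theta> = -1"
      proof (intro allI impI)
        fix \<theta> assume r: "poly f \<theta> = 0"
        show "poly (mu f \<omega>) \<theta> * \<rho> \<theta> = 1 \<or> poly (mu f \<omega>) \<theta> * \<rho> \<theta> = -1"
          using rho3[OF r] M r by (cases "\<theta> = \<omega>") auto
      qed
      obtain \<sigma> where sg: "\<sigma> = 1 \<or> \<sigma> = -1" and cs: "\<forall>\<theta>. poly f \<theta> = 0 \<longrightarrow> poly (mu f \<omega>) \<theta> * \<rho> \<theta> = \<sigma>"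
        using lin_const[OF lin pm, of a b c] abc by auto
      have "\<forall>\<theta>. poly f \<theta> = 0 \<longrightarrow> \<rho> \<theta> = \<sigma> * poly (mu f \<omega>) \<theta>"
      proof (intro allI impI)
        fix \<theta> assume r: "poly f \<theta> = 0"
        have "\<sigma> * poly (mu f \<omega>) \<theta> = (poly (mu f \<omega>) \<theta> * poly (mu f \<omega>) \<theta>) * \<rho> \<theta>" using cs r by (simp add: algebra_simps)
        then show "\<rho> \<theta> = \<sigma> * poly (mu f \<omega>) \<theta>" using M r by (auto split: if_splits)
      qed
      then show ?thesis using sg by blast
    qed
    have claimB: "L \<noteq> L' \<and> (\<exists>q. q \<noteq> 0 \<and> q \<in> L \<inter> L') \<and> L \<inter> L' = Psub f \<epsilon> \<omega> \<and> Psub f \<epsilon> \<omega> = Psub f \<epsilon>' \<omega>"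
      if w: "poly f \<omega> = 0" and sg: "\<sigma> = 1 \<or> \<sigma> = -1" and rs: "\<forall>\<theta>. poly f \<theta> = 0 \<longrightarrow> \<rho> \<theta> = \<sigma> * poly (mu f \<omega>) \<theta>"
      for \<omega> \<sigma>
    proof -
      note M = mu_props[OF deg card w]
      have s0: "\<sigma> \<noteq> 0" using sg two by auto
      have rs2: "\<rho> \<theta> = (if \<theta> = \<omega> then -\<sigma> else \<sigma>)" if "poly f \<theta> = 0" for \<theta> using rs M that by auto
      obtain a b where ab: "poly f a = 0" "poly f b = 0" "a \<noteq> b" "a \<noteq> \<omega>" "b \<noteq> \<omega>"
        using two_other[OF fin c3, of \<omega>] w by auto
      have IAE: "poly (Ainv f \<epsilon>) \<theta> * poly \<epsilon> \<theta> = 1" if "poly f \<theta> = 0" for \<theta> by (rule Ainv_poly[OF u that])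
      have AA: "Aelem f (Ainv f \<epsilon>)" using Ainv_props[OF u] by blast
      have b1: "L \<noteq> L'"
      proof
        assume LL: "L = L'"
        define q0 where "q0 = Ainv f \<epsilon>"
        have "islin f (\<lambda>\<theta>. poly q0 \<theta> * poly \<epsilon> \<theta>)" unfolding islin_def
          by (rule exI[of _ 0], rule exI[of _ 1]) (simp add: q0_def IAE)
        then have "q0 \<in> L" using Lc AA q0_def by simp
        then have "islin f (\<lambda>\<theta>. \<rho> \<theta> * (poly q0 \<theta> * poly \<epsilon> \<theta>))" using LL Lc' L'rho by simp
        moreover have "islin f (\<lambda>\<theta>. \<rho> \<theta> * (poly q0 \<theta> * poly \<epsilon> \<theta>)) \<longleftrightarrow> islin f (\<lambda>\<theta>. \<sigma> * (if \<theta> = \<omega> then -1 else 1))"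
          by (rule islin_cong) (simp add: q0_def IAE rs2)
        ultimately have "islin f (\<lambda>\<theta>. if \<theta> = \<omega> then -1 else (1::'a))" using islin_scale[OF s0] by simp
        then show False using mu_not_lin[OF two w ab(1,2,3,4,5)] by simp
      qed
      define q1 where "q1 = Amult f (Ainv f \<epsilon>) [:-\<omega>, 1:]"
      have q1E: "poly q1 \<theta> * poly \<epsilon> \<theta> = \<theta> - \<omega>" if r: "poly f \<theta> = 0" for \<theta>
      proof -
        have "poly q1 \<theta> * poly \<epsilon> \<theta> = (poly (Ainv f \<epsilon>) \<theta> * poly \<epsilon> \<theta>) * (\<theta> - \<omega>)"
          unfolding q1_def poly_Amult[OF r] by (simp add: algebra_simps)
        then show ?thesis using IAE[OF r] by simp
      qed
      have q1A: "Aelem f q1" unfolding q1_def by (rule Aelem_Amult[OF deg])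
      have "islin f (\<lambda>\<theta>. poly q1 \<theta> * poly \<epsilon> \<theta>)" unfolding islin_def
        by (rule exI[of _ 1], rule exI[of _ "-\<omega>"]) (simp add: q1E)
      moreover have "islin f (\<lambda>\<theta>. \<rho> \<theta> * (poly q1 \<theta> * poly \<epsilon> \<theta>))" unfolding islin_def
      proof (rule exI[of _ \<sigma>], rule exI[of _ "-\<sigma>*\<omega>"], intro allI impI)
        fix \<theta> assume r: "poly f \<theta> = 0"
        show "\<rho> \<theta> * (poly q1 \<theta> * poly \<epsilon> \<theta>) = \<sigma> * \<theta> + - \<sigma> * \<omega>"
          unfolding q1E[OF r] rs2[OF r] by (cases "\<theta> = \<omega>") (auto simp: algebra_simps)
      qed
      ultimately have q1in: "q1 \<in> L \<inter> L'" using Lc Lc' L'rho q1A by simp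
      have "q1 \<noteq> 0"
      proof
        assume "q1 = 0"
        then have "a - \<omega> = 0" using q1E[OF ab(1)] by simp
        then show False using ab by simp
      qed
      then have b2: "\<exists>q. q \<noteq> 0 \<and> q \<in> L \<inter> L'" using q1in by blast
      have b3: "L \<inter> L' = Psub f \<epsilon> \<omega>"
      proof (intro set_eqI iffI)
        fix q assume "q \<in> L \<inter> L'"
        then have qA: "Aelem f q" and l1: "islin f (\<lambda>\<theta>. poly q \<theta> * poly \<epsilon> \<theta>)" and l2: "islin f (\<lambda>\<theta>. \<rho> \<theta> * (poly q \<theta> * poly \<epsilon> \<theta>))"
          using Lc Lc' L'rho by auto
        obtain s t where st: "\<forall>\<theta>. poly f \<theta> = 0 \<longrightarrow> poly q \<theta> * poly \<epsilon> \<theta> = s*\<theta>+t" using l1 unfolding islin_def by blast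
        obtain s' t' where st': "\<forall>\<theta>. poly f \<theta> = 0 \<longrightarrow> \<rho> \<theta> * (poly q \<theta> * poly \<epsilon> \<theta>) = s'*\<theta>+t'" using l2 unfolding islin_def by blast
        have "(\<sigma>*s)*a+(\<sigma>*t) = s'*a+t'" "(\<sigma>*s)*b+(\<sigma>*t) = s'*b+t'"
          using st st' rs2 ab by (auto simp: algebra_simps)
        then have ss: "\<sigma>*s = s' \<and> \<sigma>*t = t'" using lin2[OF ab(3)] by blast
        have "-\<sigma>*(s*\<omega>+t) = \<sigma>*(s*\<omega>+t)" using st[rule_format, OF w] st'[rule_format, OF w] rs2[OF w] ss
          by (simp add: algebra_simps)
        then have "2*\<sigma>*(s*\<omega>+t) = 0" by (simp add: algebra_simps)
        then have "s*\<omega>+t = 0" using two s0 by simp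
        then have "\<forall>\<theta>. poly f \<theta> = 0 \<longrightarrow> poly q \<theta> * poly \<epsilon> \<theta> = s*(\<theta>-\<omega>)"
          using st by (auto simp: algebra_simps eq_neg_iff_add_eq_0[symmetric] add_eq_0_iff2)
        then show "q \<in> Psub f \<epsilon> \<omega>" using Pc qA by blast
      next
        fix q assume "q \<in> Psub f \<epsilon> \<omega>"
        then obtain s where qA: "Aelem f q" and st: "\<forall>\<theta>. poly f \<theta> = 0 \<longrightarrow> poly q \<theta> * poly \<epsilon> \<theta> = s*(\<theta>-\<omega>)"
          using Pc by blast
        have "islin f (\<lambda>\<theta>. poly q \<theta> * poly \<epsilon> \<theta>)" unfolding islin_def
        proof (rule exI[of _ s], rule exI[of _ "-s*\<omega>"], intro allI impI)
          fix \<theta> assume r: "poly f \<theta> = 0"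
          show "poly q \<theta> * poly \<epsilon> \<theta> = s * \<theta> + - s * \<omega>"
            unfolding st[rule_format, OF r] by (simp add: algebra_simps)
        qed
        moreover have "islin f (\<lambda>\<theta>. \<rho> \<theta> * (poly q \<theta> * poly \<epsilon> \<theta>))" unfolding islin_def
        proof (rule exI[of _ "\<sigma>*s"], rule exI[of _ "-\<sigma>*s*\<omega>"], intro allI impI)
          fix \<theta> assume r: "poly f \<theta> = 0"
          show "\<rho> \<theta> * (poly q \<theta> * poly \<epsilon> \<theta>) = \<sigma> * s * \<theta> + - \<sigma> * s * \<omega>"
            unfolding st[rule_format, OF r] rs2[OF r] by (cases "\<theta> = \<omega>") (auto simp: algebra_simps)
        qed
        ultimately show "q \<in> L \<inter> L'" using Lc Lc' L'rho qA by simp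
      qed
      have b4: "Psub f \<epsilon> \<omega> = Psub f \<epsilon>' \<omega>"
      proof -
        have "(\<exists>s. \<forall>\<theta>. poly f \<theta> = 0 \<longrightarrow> poly q \<theta> * poly \<epsilon> \<theta> = s*(\<theta>-\<omega>)) \<longleftrightarrow>
              (\<exists>s. \<forall>\<theta>. poly f \<theta> = 0 \<longrightarrow> poly q \<theta> * poly \<epsilon>' \<theta> = s*(\<theta>-\<omega>))" for q
        proof
          assume "\<exists>s. \<forall>\<theta>. poly f \<theta> = 0 \<longrightarrow> poly q \<theta> * poly \<epsilon> \<theta> = s*(\<theta>-\<omega>)"
          then obtain s where st: "\<forall>\<theta>. poly f \<theta> = 0 \<longrightarrow> poly q \<theta> * poly \<epsilon> \<theta> = s*(\<theta>-\<omega>)" by blast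
          have "\<forall>\<theta>. poly f \<theta> = 0 \<longrightarrow> poly q \<theta> * poly \<epsilon>' \<theta> = (\<sigma>*s)*(\<theta>-\<omega>)"
          proof (intro allI impI)
            fix \<theta> assume r: "poly f \<theta> = 0"
            have "poly q \<theta> * poly \<epsilon>' \<theta> = \<rho> \<theta> * (poly q \<theta> * poly \<epsilon> \<theta>)" using rho1[OF r] by (simp add: algebra_simps)
            then show "poly q \<theta> * poly \<epsilon>' \<theta> = (\<sigma>*s)*(\<theta>-\<omega>)" using st r rs2[OF r] by auto
          qed
          then show "\<exists>s. \<forall>\<theta>. poly f \<theta> = 0 \<longrightarrow> poly q \<theta> * poly \<epsilon>' \<theta> = s*(\<theta>-\<omega>)" by blast
        next
          assume "\<exists>s. \<forall>\<theta>. poly f \<theta> = 0 \<longrightarrow> poly q \<theta> * poly \<epsilon>' \<theta> = s*(\<theta>-\<omega>)"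
          then obtain s where st: "\<forall>\<theta>. poly f \<theta> = 0 \<longrightarrow> poly q \<theta> * poly \<epsilon>' \<theta> = s*(\<theta>-\<omega>)" by blast
          have "\<forall>\<theta>. poly f \<theta> = 0 \<longrightarrow> poly q \<theta> * poly \<epsilon> \<theta> = (\<sigma>*s)*(\<theta>-\<omega>)"
          proof (intro allI impI)
            fix \<theta> assume r: "poly f \<theta> = 0"
            have "poly q \<theta> * poly \<epsilon> \<theta> = \<rho> \<theta> * (poly q \<theta> * poly \<epsilon>' \<theta>)" using rho2[OF r] by (simp add: algebra_simps)
            then show "poly q \<theta> * poly \<epsilon> \<theta> = (\<sigma>*s)*(\<theta>-\<omega>)" using st r rs2[OF r] by auto
          qed
          then show "\<exists>s. \<forall>\<theta>. poly f \<theta> = 0 \<longrightarrow> poly q \<theta> * poly \<epsilon> \<theta> = s*(\<theta>-\<omega>)" by blast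
        qed
        then show ?thesis unfolding Pc Pc' by auto
      qed
      show ?thesis using b1 b2 b3 b4 by blast
    qed
    have fwd: "\<exists>\<omega>. poly f \<omega> = 0 \<and> act f (mu f \<omega>) L = L'"
      if ne: "L \<noteq> L'" and ex: "\<exists>q. q \<noteq> 0 \<and> q \<in> L \<inter> L'"
    proof -
      obtain q where q0: "q \<noteq> 0" and qin: "q \<in> L \<inter> L'" using ex by blast
      then have qA: "Aelem f q" and l1: "islin f (\<lambda>\<theta>. poly q \<theta> * poly \<epsilon> \<theta>)" and l2: "islin f (\<lambda>\<theta>. \<rho> \<theta> * (poly q \<theta> * poly \<epsilon> \<theta>))"
        using Lc Lc' L'rho by auto
      obtain s t where st: "\<forall>\<theta>. poly f \<theta> = 0 \<longrightarrow> poly q \<theta> * poly \<epsilon> \<theta> = s*\<theta>+t" using l1 unfolding islin_def by blast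
      obtain s' t' where st': "\<forall>\<theta>. poly f \<theta> = 0 \<longrightarrow> \<rho> \<theta> * (poly q \<theta> * poly \<epsilon> \<theta>) = s'*\<theta>+t'" using l2 unfolding islin_def by blast
      obtain a b c where abc: "poly f a = 0" "poly f b = 0" "poly f c = 0" "a \<noteq> b" "a \<noteq> c" "b \<noteq> c"
        using three_elems[OF fin c3] by blast
      have "\<exists>x y. poly f x = 0 \<and> poly f y = 0 \<and> x \<noteq> y \<and> \<rho> x = \<rho> y"
        using abc rho3[OF abc(1)] rho3[OF abc(2)] rho3[OF abc(3)] by metis
      then obtain x y where xy: "poly f x = 0" "poly f y = 0" "x \<noteq> y" "\<rho> x = \<rho> y" by blast
      define \<sigma> where "\<sigma> = \<rho> x"
      have sg: "\<sigma> = 1 \<or> \<sigma> = -1" using rho3[OF xy(1)] \<sigma>_def by simp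
      have s0: "\<sigma> \<noteq> 0" using sg two by auto
      have "(\<sigma>*s)*x+(\<sigma>*t) = s'*x+t'" "(\<sigma>*s)*y+(\<sigma>*t) = s'*y+t'"
        using st st' xy \<sigma>_def by (auto simp: algebra_simps)
      then have ss: "\<sigma>*s = s' \<and> \<sigma>*t = t'" using lin2[OF xy(3)] by blast
      have zero_of: "s*\<theta>+t = 0" if r: "poly f \<theta> = 0" and nr: "\<rho> \<theta> \<noteq> \<sigma>" for \<theta>
      proof -
        have rm: "\<rho> \<theta> = -\<sigma>" using rho3[OF r] sg nr by auto
        have e1: "-\<sigma>*(s*\<theta>+t) = \<rho> \<theta> * (poly q \<theta> * poly \<epsilon> \<theta>)" using st[rule_format, OF r] rm by argo
        have e3: "s'*\<theta>+t' = \<sigma>*(s*\<theta>+t)" using ss by (metis distrib_left mult.assoc)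
        have "-\<sigma>*(s*\<theta>+t) = \<sigma>*(s*\<theta>+t)" using e1 e3 st'[rule_format, OF r] by argo
        then have "2*\<sigma>*(s*\<theta>+t) = 0" by (simp add: algebra_simps)
        then show ?thesis using two s0 by simp
      qed
      have uniq: "\<theta>1 = \<theta>2" if "poly f \<theta>1 = 0" "poly f \<theta>2 = 0" "\<rho> \<theta>1 \<noteq> \<sigma>" "\<rho> \<theta>2 \<noteq> \<sigma>" for \<theta>1 \<theta>2
      proof (rule ccontr)
        assume d: "\<theta>1 \<noteq> \<theta>2"
        have z1: "s*\<theta>1+t = 0" by (rule zero_of[OF that(1) that(3)])
        have z2: "s*\<theta>2+t = 0" by (rule zero_of[OF that(2) that(4)])
        have "s*\<theta>1+t = 0*\<theta>1+0" "s*\<theta>2+t = 0*\<theta>2+0" by (simp_all only: z1 z2 mult_zero_left add_0_right)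
        then have st0: "s = 0 \<and> t = 0" using lin2[OF d] by blast
        have "q = 0"
        proof (rule Aeq[OF deg card qA zero])
          fix \<theta> assume r: "poly f \<theta> = 0"
          have "poly q \<theta> * poly \<epsilon> \<theta> = 0" using st[rule_format, OF r] st0 by simp
          then show "poly q \<theta> = poly 0 \<theta>" using Enz[OF r] by simp
        qed
        then show False using q0 by simp
      qed
      show ?thesis
      proof (cases "\<exists>\<omega>. poly f \<omega> = 0 \<and> \<rho> \<omega> \<noteq> \<sigma>")
        case False
        have "L = L'"
        proof -
          have "islin f (\<lambda>\<theta>. \<rho> \<theta> * (poly q \<theta> * poly \<epsilon> \<theta>)) \<longleftrightarrow> islin f (\<lambda>\<theta>. poly q \<theta> * poly \<epsilon> \<theta>)" for q
          proof -
            have "islin f (\<lambda>\<theta>. \<rho> \<theta> * (poly q \<theta> * poly \<epsilon> \<theta>)) \<longleftrightarrow> islin f (\<lambda>\<theta>. \<sigma> * (poly q \<theta> * poly \<epsilon> \<theta>))"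
              by (rule islin_cong) (use False in auto)
            then show ?thesis using islin_scale[OF s0] by simp
          qed
          then show ?thesis using Lc Lc' L'rho by auto
        qed
        then show ?thesis using ne by simp
      next
        case True
        then obtain \<omega> where w: "poly f \<omega> = 0" "\<rho> \<omega> \<noteq> \<sigma>" by blast
        note M = mu_props[OF deg card w(1)]
        have "\<forall>\<theta>. poly f \<theta> = 0 \<longrightarrow> \<rho> \<theta> = \<sigma> * poly (mu f \<omega>) \<theta>"
        proof (intro allI impI)
          fix \<theta> assume r: "poly f \<theta> = 0"
          show "\<rho> \<theta> = \<sigma> * poly (mu f \<omega>) \<theta>"
          proof (cases "\<theta> = \<omega>")
            case True
            then show ?thesis using M r rho3[OF r] w sg by auto
          next
            case False
            then have "\<rho> \<theta> = \<sigma>" using uniq[OF r w(1) _ w(2)] by blast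
            then show ?thesis using M r False by auto
          qed
        qed
        then show ?thesis using claimC[OF w(1) sg] w(1) by blast
      qed
    qed
    show "((Lsub f \<epsilon> \<noteq> Lsub f \<epsilon>' \<and> (\<exists>q. q \<noteq> 0 \<and> q \<in> Lsub f \<epsilon> \<inter> Lsub f \<epsilon>'))
               \<longleftrightarrow> (\<exists>\<omega>. poly f \<omega> = 0 \<and> act f (mu f \<omega>) (Lsub f \<epsilon>) = Lsub f \<epsilon>'))
          \<and> (\<forall>\<omega>. poly f \<omega> = 0 \<longrightarrow> act f (mu f \<omega>) (Lsub f \<epsilon>) = Lsub f \<epsilon>' \<longrightarrow>
               Lsub f \<epsilon> \<inter> Lsub f \<epsilon>' = Psub f \<epsilon> \<omega> \<and> Psub f \<epsilon> \<omega> = Psub f \<epsilon>' \<omega>)"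
      unfolding L_def[symmetric] L'_def[symmetric]
    proof (intro conjI iffI allI impI)
      assume "L \<noteq> L' \<and> (\<exists>q. q \<noteq> 0 \<and> q \<in> L \<inter> L')"
      then show "\<exists>\<omega>. poly f \<omega> = 0 \<and> act f (mu f \<omega>) L = L'" using fwd by blast
    next
      assume "\<exists>\<omega>. poly f \<omega> = 0 \<and> act f (mu f \<omega>) L = L'"
      then obtain \<omega> where w: "poly f \<omega> = 0" "act f (mu f \<omega>) L = L'" by blast
      obtain \<sigma> where "\<sigma> = 1 \<or> \<sigma> = -1" "\<forall>\<theta>. poly f \<theta> = 0 \<longrightarrow> \<rho> \<theta> = \<sigma> * poly (mu f \<omega>) \<theta>"
        using claimA[OF w] by blast
      from claimB[OF w(1) this] show "L \<noteq> L'" by blast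
    next
      assume "\<exists>\<omega>. poly f \<omega> = 0 \<and> act f (mu f \<omega>) L = L'"
      then obtain \<omega> where w: "poly f \<omega> = 0" "act f (mu f \<omega>) L = L'" by blast
      obtain \<sigma> where "\<sigma> = 1 \<or> \<sigma> = -1" "\<forall>\<theta>. poly f \<theta> = 0 \<longrightarrow> \<rho> \<theta> = \<sigma> * poly (mu f \<omega>) \<theta>"
        using claimA[OF w] by blast
      from claimB[OF w(1) this] show "\<exists>q. q \<noteq> 0 \<and> q \<in> L \<inter> L'" by blast
    next
      fix \<omega> assume w: "poly f \<omega> = 0" "act f (mu f \<omega>) L = L'"
      obtain \<sigma> where "\<sigma> = 1 \<or> \<sigma> = -1" "\<forall>\<theta>. poly f \<theta> = 0 \<longrightarrow> \<rho> \<theta> = \<sigma> * poly (mu f \<omega>) \<theta>"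
        using claimA[OF w] by blast
      note B = claimB[OF w(1) this]
      show "L \<inter> L' = Psub f \<epsilon> \<omega>" using B by blast
    next
      fix \<omega> assume w: "poly f \<omega> = 0" "act f (mu f \<omega>) L = L'"
      obtain \<sigma> where "\<sigma> = 1 \<or> \<sigma> = -1" "\<forall>\<theta>. poly f \<theta> = 0 \<longrightarrow> \<rho> \<theta> = \<sigma> * poly (mu f \<omega>) \<theta>"
        using claimA[OF w] by blast
      note B = claimB[OF w(1) this]
      show "Psub f \<epsilon> \<omega> = Psub f \<epsilon>' \<omega>" using B by blast
    qed
  qed
  show ?thesis using P1 P2 by blast
qed

end
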